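(* Let $B$ be the infinite complete binary tree, i.e. the rooted tree starting from a single root vertex in which every vertex has exactly two children. Then $\chi_{td}(B) = 7$.
   Context: For a (possibly infinite) simple graph $G$ and a positive integer $k$, a proper $k$-total difference labeling of $G$ is a function $f: V(G)\to\{1,\dots,k\}$, extended to edges by $f(\{u,v\}) = |f(u)-f(v)|$, such that: (i) adjacent vertices receive different labels; (ii) two distinct edges sharing a vertex receive different labels; (iii) no edge receives the same label as either of its endpoints. $\chi_{td}(G)$ denotes the smallest $k$ for which $G$ has a proper $k$-total difference labeling. *)

theory Defs
  imports Main
begin

definition simple_graph :: "'a set \<Rightarrow> ('a \<Rightarrow> 'a \<Rightarrow> bool) \<Rightarrow> bool" where
  "simple_graph V E \<longleftrightarrow> (\<forall>u v. E u v \<longrightarrow> u \<in> V \<and> v \<in> V \<and> u \<noteq> v \<and> E v u)"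

definition edge_label :: "('a \<Rightarrow> nat) \<Rightarrow> 'a \<Rightarrow> 'a \<Rightarrow> int" where
  "edge_label f u v = \<bar>int (f u) - int (f v)\<bar>"

definition proper_total_difference_labeling ::
  "'a set \<Rightarrow> ('a \<Rightarrow> 'a \<Rightarrow> bool) \<Rightarrow> nat \<Rightarrow> ('a \<Rightarrow> nat) \<Rightarrow> bool" where
  "proper_total_difference_labeling V E k f \<longleftrightarrow>
     (\<forall>v\<in>V. f v \<in> {1..k}) \<and>
     (\<forall>u v. E u v \<longrightarrow> f u \<noteq> f v) \<and>
     (\<forall>u v w. E u v \<and> E u w \<and> v \<noteq> w \<longrightarrow> edge_label f u v \<noteq> edge_label f u w) \<and>
     (\<forall>u v. E u v \<longrightarrow> edge_label f u v \<noteq> int (f u) \<and> edge_label f u v \<noteq> int (f v))"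

definition chi_td :: "'a set \<Rightarrow> ('a \<Rightarrow> 'a \<Rightarrow> bool) \<Rightarrow> nat" where
  "chi_td V E = (LEAST k. k > 0 \<and> (\<exists>f. proper_total_difference_labeling V E k f))"

text \<open>Infinite complete binary tree: vertices are finite bool lists (root = []);
the children of xs are True # xs and False # xs.\<close>
definition bintree_V :: "bool list set" where
  "bintree_V = UNIV"

definition bintree_E :: "bool list \<Rightarrow> bool list \<Rightarrow> bool" where
  "bintree_E u v \<longleftrightarrow> (\<exists>b. u = b # v) \<or> (\<exists>b. v = b # u)"

end

theory Submission
  imports Defs
begin

definition D3 :: "nat \<Rightarrow> nat \<Rightarrow> nat \<Rightarrow> nat \<Rightarrow> bool" where
  "D3 a x y z \<longleftrightarrow> a \<in> {1..6} \<and> x \<in> {1..6} \<and> y \<in> {1..6} \<and> z \<in> {1..6} \<and>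
     x \<noteq> a \<and> y \<noteq> a \<and> z \<noteq> a \<and>
     \<bar>int a - int x\<bar> \<noteq> int a \<and> \<bar>int a - int x\<bar> \<noteq> int x \<and>
     \<bar>int a - int y\<bar> \<noteq> int a \<and> \<bar>int a - int y\<bar> \<noteq> int y \<and>
     \<bar>int a - int z\<bar> \<noteq> int a \<and> \<bar>int a - int z\<bar> \<noteq> int z \<and>
     \<bar>int a - int x\<bar> \<noteq> \<bar>int a - int y\<bar> \<and> \<bar>int a - int x\<bar> \<noteq> \<bar>int a - int z\<bar> \<and>
     \<bar>int a - int y\<bar> \<noteq> \<bar>int a - int z\<bar>"

lemma six: "(a::nat) \<in> {1..6} \<Longrightarrow> a = 1 \<or> a = 2 \<or> a = 3 \<or> a = 4 \<or> a = 5 \<or> a = 6"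
  by auto

lemma D3_all:
  assumes "D3 a x y z"
  shows "a \<noteq> 3 \<and> (x \<noteq> 3 \<and> y \<noteq> 3 \<and> z \<noteq> 3 \<longrightarrow> a \<noteq> 2)
    \<and> (x \<notin> {2,3} \<and> y \<notin> {2,3} \<and> z \<notin> {2,3} \<longrightarrow> a \<noteq> 5)
    \<and> (x \<notin> {2,3,5} \<and> y \<notin> {2,3,5} \<and> z \<notin> {2,3,5} \<longrightarrow> a \<in> {2,3,5})"
proof -
  from assms have a: "a \<in> {1..6}" and x: "x \<in> {1..6}" and y: "y \<in> {1..6}" and z: "z \<in> {1..6}"
    unfolding D3_def by auto
  from six[OF a] six[OF x] six[OF y] six[OF z] assms show ?thesis
    unfolding D3_def by (elim disjE) simp_all
qed


lemma labeling_D3: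
  assumes P: "proper_total_difference_labeling bintree_V bintree_E k f" and k: "k \<le> 6"
  shows "D3 (f (c#w)) (f w) (f (True#c#w)) (f (False#c#w))"
proof -
  let ?u = "c#w"
  have E1: "bintree_E ?u w" "bintree_E ?u (True#?u)" "bintree_E ?u (False#?u)"
    unfolding bintree_E_def by auto
  have ne: "w \<noteq> True#?u" "w \<noteq> False#?u" "True#?u \<noteq> False#?u"
    by (auto dest: arg_cong[of _ _ length])
  have r: "\<And>v. f v \<in> {1..6}" using P k unfolding proper_total_difference_labeling_def bintree_V_def
    by fastforce
  from P have p2: "\<And>u v. bintree_E u v \<Longrightarrow> f u \<noteq> f v"
    and p3: "\<And>u v w. bintree_E u v \<Longrightarrow> bintree_E u w \<Longrightarrow> v \<noteq> w \<Longrightarrow> edge_label f u v \<noteq> edge_label f u w"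
    and p4: "\<And>u v. bintree_E u v \<Longrightarrow> edge_label f u v \<noteq> int (f u) \<and> edge_label f u v \<noteq> int (f v)"
    unfolding proper_total_difference_labeling_def by blast+
  show ?thesis unfolding D3_def
    using r[of ?u] r[of w] r[of "True#?u"] r[of "False#?u"]
      p2[OF E1(1)] p2[OF E1(2)] p2[OF E1(3)] p4[OF E1(1)] p4[OF E1(2)] p4[OF E1(3)]
      p3[OF E1(1) E1(2) ne(1)] p3[OF E1(1) E1(3) ne(2)] p3[OF E1(2) E1(3) ne(3)]
    unfolding edge_label_def by auto
qed

lemma no6:
  assumes P: "proper_total_difference_labeling bintree_V bintree_E k f" and k: "k \<le> 6"
  shows False
proof -
  have D: "\<And>c w. D3 (f (c#w)) (f w) (f (True#c#w)) (f (False#c#w))"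
    using labeling_D3[OF P k] .
  have L1: "\<And>u. length u \<ge> 1 \<Longrightarrow> f u \<noteq> 3"
  proof -
    fix u :: "bool list" assume "length u \<ge> 1"
    then obtain c w where "u = c#w" by (cases u) auto
    then show "f u \<noteq> 3" using D3_all[OF D[of c w]] by simp
  qed
  have L2: "\<And>u. length u \<ge> 2 \<Longrightarrow> f u \<notin> {2,3}"
  proof -
    fix u :: "bool list" assume "length u \<ge> 2"
    then obtain c w where u: "u = c#w" and "length w \<ge> 1" by (cases u) auto
    then show "f u \<notin> {2,3}" using D3_all[OF D[of c w]] L1[of w] L1[of "True#u"] L1[of "False#u"]
      by simp
  qed
  have L3: "\<And>u. length u \<ge> 3 \<Longrightarrow> f u \<notin> {2,3,5}"
  proof -
    fix u :: "bool list" assume "length u \<ge> 3"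
    then obtain c w where u: "u = c#w" and "length w \<ge> 2" by (cases u) auto
    then show "f u \<notin> {2,3,5}" using D3_all[OF D[of c w]] L2[of w] L2[of "True#u"] L2[of "False#u"]
      by simp
  qed
  let ?w = "[True,True,True]"
  show False using D3_all[OF D[of True ?w]] L3[of ?w] L3[of "True#True#?w"] L3[of "False#True#?w"]
    L3[of "True#?w"] by auto
qed

definition ch :: "nat \<Rightarrow> bool \<Rightarrow> nat" where
  "ch a b = (if b then [0,3,5,2,5,1,1,1] ! a else [0,4,6,7,6,3,5,2] ! a)"

fun lab :: "bool list \<Rightarrow> nat" where
  "lab [] = 1"
| "lab (b#v) = ch (lab v) b"

lemma seven: "(a::nat) \<in> {1..7} \<Longrightarrow> a = 1 \<or> a = 2 \<or> a = 3 \<or> a = 4 \<or> a = 5 \<or> a = 6 \<or> a = 7"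
  by auto

lemma ch_range: "a \<in> {1..7} \<Longrightarrow> ch a b \<in> {1..7}"
  by (drule seven) (cases b; auto simp: ch_def)

lemma lab_range: "lab v \<in> {1..7}"
  by (induction v) (simp, metis ch_range lab.simps(2))

lemma ch_edge: "a \<in> {1..7} \<Longrightarrow> ch a b \<noteq> a \<and> \<bar>int a - int (ch a b)\<bar> \<noteq> int a \<and> \<bar>int a - int (ch a b)\<bar> \<noteq> int (ch a b)"
  by (drule seven) (cases b; auto simp: ch_def)

lemma ch_kids: "a \<in> {1..7} \<Longrightarrow> \<bar>int a - int (ch a True)\<bar> \<noteq> \<bar>int a - int (ch a False)\<bar>"
  by (drule seven) (auto simp: ch_def)

lemma ch_par: "a \<in> {1..7} \<Longrightarrow> \<bar>int (ch a b) - int a\<bar> \<noteq> \<bar>int (ch a b) - int (ch (ch a b) b')\<bar>"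
  by (drule seven) (cases b; cases b'; auto simp: ch_def)

lemma lab_proper: "proper_total_difference_labeling bintree_V bintree_E 7 lab"
  unfolding proper_total_difference_labeling_def
proof (intro conjI allI impI)
  show "\<forall>v\<in>bintree_V. lab v \<in> {1..7}" using lab_range by blast
next
  fix u v assume "bintree_E u v"
  then consider b where "u = b#v" | b where "v = b#u" unfolding bintree_E_def by blast
  then show "lab u \<noteq> lab v"
    by cases (metis ch_edge lab_range lab.simps(2))+
next
  fix u v assume "bintree_E u v"
  then consider b where "u = b#v" | b where "v = b#u" unfolding bintree_E_def by blast
  then show "edge_label lab u v \<noteq> int (lab u)"
  proof cases
    case (1 b) then show ?thesis using ch_edge[OF lab_range, of v b] by (auto simp: abs_minus_commute edge_label_def)
  next
    case (2 b) then show ?thesis using ch_edge[OF lab_range, of u b] by (auto simp: abs_minus_commute edge_label_def)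
  qed
next
  fix u v assume "bintree_E u v"
  then consider b where "u = b#v" | b where "v = b#u" unfolding bintree_E_def by blast
  then show "edge_label lab u v \<noteq> int (lab v)"
  proof cases
    case (1 b) then show ?thesis using ch_edge[OF lab_range, of v b] by (auto simp: abs_minus_commute edge_label_def)
  next
    case (2 b) then show ?thesis using ch_edge[OF lab_range, of u b] by (auto simp: abs_minus_commute edge_label_def)
  qed
next
  fix u v w assume a: "bintree_E u v \<and> bintree_E u w \<and> v \<noteq> w"
  then consider (cc) b b' where "v = b#u" "w = b'#u" "b \<noteq> b'"
    | (pc) c b where "u = c#v" "w = b#u"
    | (cp) c b where "u = c#w" "v = b#u"
    | (pp) c c' where "u = c#v" "u = c'#w"
    unfolding bintree_E_def by blast
  then show "edge_label lab u v \<noteq> edge_label lab u w"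
  proof cases
    case cc then show ?thesis unfolding edge_label_def using ch_kids[OF lab_range, of u]
      by (cases b; cases b'; auto)
  next
    case pc then show ?thesis unfolding edge_label_def using ch_par[OF lab_range, of v c b] by auto
  next
    case cp then show ?thesis unfolding edge_label_def using ch_par[OF lab_range, of w c b] by auto
  next
    case pp then show ?thesis using a by auto
  qed
qed

theorem mainTheorem6:
  shows "chi_td bintree_V bintree_E = 7"
  unfolding chi_td_def
proof (rule Least_equality)
  show "0 < (7::nat) \<and> (\<exists>f. proper_total_difference_labeling bintree_V bintree_E 7 f)"
    using lab_proper by auto
next
  fix k assume "0 < k \<and> (\<exists>f. proper_total_difference_labeling bintree_V bintree_E k f)"
  then obtain f where "proper_total_difference_labeling bintree_V bintree_E k f" by blast
  then show "7 \<le> k" using no6[of k f] by (cases "k \<le> 6") auto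
qed

end
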